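(* Let $f\colon\underline I=I_1\times\cdots\times I_n\to\mathbb R$ be a continuous convex function ($I_i$ intervals), let $H$ be a finite-dimensional Hilbert space, let $T$ be a locally compact Hausdorff space with a Radon measure $\nu$, and let $t\mapsto a_t\in B(H)$ be a unital column field on $T$. Let $t\mapsto\underline x_t=(x_{1t},\dots,x_{nt})$ be a bounded continuous field on $T$ of abelian $n$-tuples of self-adjoint operators on $H$ with $\sigma(x_{it})\subseteq I_i$ for all $i,t$. Put $y_i=\int_T a_t^*x_{it}a_t\,d\nu(t)$, $\underline y=(y_1,\dots,y_n)$, and assume that $\underline y$ is an abelian $n$-tuple. Then $$f(\underline y)\prec_w\int_T a_t^*f(\underline x_t)a_t\,d\nu(t).$$
   Context: A unital column field is a continuous field $t\mapsto a_t$ of operators on $H$ with $\int_T a_t^*a_t\,d\nu(t)=1$. An $n$-tuple is abelian if its entries commute; $f$ of an abelian tuple of self-adjoint operators is defined by joint functional calculus. For a self-adjoint operator $x$ on an $m$-dimensional Hilbert space, $x_{[1]}\ge\cdots\ge x_{[m]}$ denote its eigenvalues counted with multiplicity in decreasing order. For self-adjoint $x,y$ on $H$, $x\prec_w y$ (weak majorization) means $\sum_{i=1}^k x_{[i]}\le\sum_{i=1}^k y_{[i]}$ for $k=1,\dots,m$. *)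

theory Defs
  imports "HOL-Analysis.Analysis" "HOL-Library.Multiset"
begin

text \<open>Operators on the finite-dimensional Hilbert space H = complex^'m are complex
  matrices of type complex^'m^'m.\<close>

definition adj :: "complex^'m^'m \<Rightarrow> complex^'m^'m" where
  "adj A = (\<chi> i j. cnj (A $ j $ i))"

definition self_adjoint :: "complex^'m^'m \<Rightarrow> bool" where
  "self_adjoint A \<longleftrightarrow> adj A = A"

definition unitary_mat :: "complex^'m^'m \<Rightarrow> bool" where
  "unitary_mat U \<longleftrightarrow> adj U ** U = mat 1 \<and> U ** adj U = mat 1"

definition diag_mat :: "('m \<Rightarrow> real) \<Rightarrow> complex^'m^'m" where
  "diag_mat d = (\<chi> i j. if i = j then complex_of_real (d i) else 0)"

definition spec :: "complex^'m^'m \<Rightarrow> complex set" where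
  "spec A = {c. \<exists>v. v \<noteq> 0 \<and> A *v v = c *s v}"

definition abelian_sa_tuple :: "('n \<Rightarrow> complex^'m^'m) \<Rightarrow> bool" where
  "abelian_sa_tuple x \<longleftrightarrow> (\<forall>i. self_adjoint (x i)) \<and> (\<forall>i j. x i ** x j = x j ** x i)"

definition joint_fc :: "(real^'n \<Rightarrow> real) \<Rightarrow> ('n \<Rightarrow> complex^'m^'m) \<Rightarrow> complex^'m^'m" where
  "joint_fc f x = (SOME R. \<exists>U D. unitary_mat U \<and> (\<forall>i. x i = U ** diag_mat (D i) ** adj U)
      \<and> R = U ** diag_mat (\<lambda>j. f (\<chi> i. D i j)) ** adj U)"

text \<open>Eigenvalues of a self-adjoint operator counted with multiplicity,
  in decreasing order (x_[1] >= ... >= x_[m]); list index 0 is x_[1].\<close>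
definition eigvals_desc :: "complex^'m^'m \<Rightarrow> real list" where
  "eigvals_desc x = rev (sorted_list_of_multiset
     (SOME M. \<exists>U d. unitary_mat U \<and> x = U ** diag_mat d ** adj U
                  \<and> M = image_mset d (mset_set (UNIV :: 'm set))))"

definition weak_major :: "complex^'m^'m \<Rightarrow> complex^'m^'m \<Rightarrow> bool" where
  "weak_major x y \<longleftrightarrow> (\<forall>k\<in>{1..CARD('m)}.
      sum_list (take k (eigvals_desc x)) \<le> sum_list (take k (eigvals_desc y)))"

definition radon_measure :: "'t::topological_space measure \<Rightarrow> bool" where
  "radon_measure M \<longleftrightarrow> sets M = sets borel
     \<and> (\<forall>K. compact K \<longrightarrow> emeasure M K < \<infinity>)
     \<and> (\<forall>A\<in>sets borel. emeasure M A = (INF U\<in>{U. open U \<and> A \<subseteq> U}. emeasure M U))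
     \<and> (\<forall>U. open U \<longrightarrow> emeasure M U = (SUP K\<in>{K. compact K \<and> K \<subseteq> U}. emeasure M K))"

definition unital_column_field :: "'t::topological_space measure \<Rightarrow> ('t \<Rightarrow> complex^'m^'m) \<Rightarrow> bool" where
  "unital_column_field M a \<longleftrightarrow> continuous_on UNIV a
     \<and> integrable M (\<lambda>t. adj (a t) ** a t)
     \<and> integral\<^sup>L M (\<lambda>t. adj (a t) ** a t) = mat 1"

end

theory Submission
  imports Defs
begin

definition cinner :: "complex^'m \<Rightarrow> complex^'m \<Rightarrow> complex" where
  "cinner u v = (\<Sum>i\<in>UNIV. u$i * cnj (v$i))"

lemma mult_cnj: "z * cnj z = complex_of_real ((cmod z)^2)"
  by (rule complex_norm_square[symmetric])

lemma cnj_mult_self: "cnj z * z = complex_of_real ((cmod z)^2)"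
  by (metis mult_cnj mult.commute)

lemma adj_nth[simp]: "adj A $ i $ j = cnj (A $ j $ i)"
  by (simp add: adj_def)

lemma adj_adj[simp]: "adj (adj A) = A"
  by (simp add: vec_eq_iff)

lemma adj_mult: "adj (A ** B) = adj B ** adj A"
  by (simp add: vec_eq_iff matrix_matrix_mult_def mult.commute)

lemma adj_mat1[simp]: "adj (mat 1 :: complex^'m^'m) = mat 1"
  by (simp add: vec_eq_iff mat_def)

lemma cinner_adj: "cinner (A *v u) v = cinner u (adj A *v v)"
proof -
  have "cinner (A *v u) v = (\<Sum>i\<in>UNIV. \<Sum>j\<in>UNIV. A$i$j * u$j * cnj (v$i))"
    unfolding cinner_def matrix_vector_mult_def by (simp add: sum_distrib_right)
  also have "\<dots> = (\<Sum>j\<in>UNIV. \<Sum>i\<in>UNIV. A$i$j * u$j * cnj (v$i))"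
    by (rule sum.swap)
  also have "\<dots> = cinner u (adj A *v v)"
    unfolding cinner_def matrix_vector_mult_def by (simp add: sum_distrib_left mult_ac)
  finally show ?thesis .
qed

lemma cinner_adj2: "cinner u (A *v v) = cinner (adj A *v u) v"
  using cinner_adj[of "adj A" u v] by simp

lemma cinner_self: "cinner v v = of_real ((norm v)^2)"
proof -
  have "cinner v v = (\<Sum>i\<in>UNIV. of_real ((cmod (v$i))^2))"
    unfolding cinner_def by (simp add: mult_cnj cnj_mult_self)
  also have "\<dots> = of_real (\<Sum>i\<in>UNIV. (norm (v$i))^2)" by simp
  also have "(\<Sum>i\<in>UNIV. (norm (v$i))^2) = (norm v)^2"
    unfolding norm_vec_def L2_set_def by (simp add: sum_nonneg)
  finally show ?thesis .
qed

lemma diag_mult_vec: "diag_mat d *v v = (\<chi> i. complex_of_real (d i) * v $ i)"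
  unfolding diag_mat_def matrix_vector_mult_def
  by (simp add: vec_eq_iff if_distrib if_distribR cong: if_cong)

lemma qf_diag:
  "cinner ((V ** diag_mat d ** adj V) *v w) w
     = complex_of_real (\<Sum>l\<in>UNIV. d l * (cmod ((adj V *v w) $ l))^2)"
proof -
  have "cinner ((V ** diag_mat d ** adj V) *v w) w = cinner (diag_mat d *v (adj V *v w)) (adj V *v w)"
    by (simp add: cinner_adj matrix_vector_mul_assoc[symmetric])
  also have "\<dots> = (\<Sum>l\<in>UNIV. complex_of_real (d l) * ((adj V *v w) $ l) * cnj ((adj V *v w) $ l))"
    by (simp add: cinner_def diag_mult_vec)
  also have "\<dots> = complex_of_real (\<Sum>l\<in>UNIV. d l * (cmod ((adj V *v w) $ l))^2)"
    by (simp add: mult.assoc mult_cnj cnj_mult_self)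
  finally show ?thesis .
qed

lemma unitary_cols:
  assumes "unitary_mat U"
  shows "cinner (column j U) (column i U) = (if i = j then 1 else 0)"
proof -
  have "(adj U ** U) $ i $ j = (if i = j then 1 else 0)"
    using assms by (simp add: unitary_mat_def mat_def)
  moreover have "cinner (column j U) (column i U) = (adj U ** U) $ i $ j"
    unfolding matrix_matrix_mult_def cinner_def column_def by (simp add: mult.commute)
  ultimately show ?thesis by simp
qed

lemma unitary_rows:
  assumes "unitary_mat U"
  shows "(\<Sum>j\<in>UNIV. (cmod (U $ l $ j))^2) = 1"
proof -
  have "(U ** adj U) $ l $ l = 1"
    using assms by (simp add: unitary_mat_def mat_def)
  then have "(\<Sum>j\<in>UNIV. complex_of_real ((cmod (U $ l $ j))^2)) = 1"
    by (simp add: matrix_matrix_mult_def mult_cnj cnj_mult_self)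
  then show ?thesis
    by (metis of_real_eq_1_iff of_real_sum)
qed

lemma unitary_colsum:
  assumes "unitary_mat U"
  shows "(\<Sum>l\<in>UNIV. (cmod (U $ l $ j))^2) = 1"
proof -
  have "(adj U ** U) $ j $ j = 1"
    using assms by (simp add: unitary_mat_def mat_def)
  then have "(\<Sum>l\<in>UNIV. complex_of_real ((cmod (U $ l $ j))^2)) = 1"
    by (simp add: matrix_matrix_mult_def mult_cnj cnj_mult_self mult.commute)
  then show ?thesis
    by (metis of_real_eq_1_iff of_real_sum)
qed

lemma unitary_mult:
  assumes "unitary_mat U" "unitary_mat V"
  shows "unitary_mat (U ** V)"
  using assms unfolding unitary_mat_def adj_mult
  by (metis matrix_mul_assoc matrix_mul_lid matrix_mul_rid)

lemma unitary_adj: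
  assumes "unitary_mat U" shows "unitary_mat (adj U)"
  using assms unfolding unitary_mat_def by simp

lemma adj_U_col:
  assumes "unitary_mat U"
  shows "adj U *v column j U = axis j 1"
proof -
  have "U *v axis j 1 = column j U"
    by (simp add: matrix_vector_mult_def column_def axis_def
        vec_eq_iff if_distrib if_distribR cong: if_cong)
  then have "adj U *v column j U = (adj U ** U) *v axis j 1"
    by (simp add: matrix_vector_mul_assoc[symmetric])
  then show ?thesis using assms by (simp add: unitary_mat_def)
qed

lemma qf_col:
  assumes "unitary_mat V"
  shows "cinner ((V ** diag_mat d ** adj V) *v column j V) (column j V) = complex_of_real (d j)"
  unfolding qf_diag adj_U_col[OF assms]
  by (simp add: axis_def if_distrib if_distribR cong: if_cong)

lemma cinner_add_left: "cinner (u + v) w = cinner u w + cinner v w"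
  by (simp add: cinner_def distrib_right sum.distrib)
lemma cinner_diff_left: "cinner (u - v) w = cinner u w - cinner v w"
  by (simp add: cinner_def left_diff_distrib sum_subtractf)
lemma cinner_scaleR_left: "cinner ((c::real) *\<^sub>R u) w = complex_of_real c * cinner u w"
  unfolding cinner_def vector_scaleR_component unfolding scaleR_conv_of_real by (simp add: sum_distrib_left mult.assoc)
lemma cinner_scaleR_right: "cinner u ((c::real) *\<^sub>R w) = complex_of_real c * cinner u w"
  unfolding cinner_def vector_scaleR_component unfolding scaleR_conv_of_real by (simp add: sum_distrib_left mult_ac)
lemma cinner_smult_left: "cinner (c *s u) w = c * cinner u w"
  by (simp add: cinner_def sum_distrib_left mult.assoc)
lemma cinner_smult_right: "cinner u (c *s w) = cnj c * cinner u w"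
  by (simp add: cinner_def sum_distrib_left mult_ac)
lemma cinner_zero_left[simp]: "cinner 0 w = 0"
  by (simp add: cinner_def)
lemma cinner_sum_left: "finite A \<Longrightarrow> cinner (\<Sum>b\<in>A. f b) w = (\<Sum>b\<in>A. cinner (f b) w)"
  by (induction A rule: finite_induct) (auto simp: cinner_add_left)

lemma inner_cinner: "inner u v = Re (cinner u v)"
  unfolding inner_vec_def cinner_def inner_complex_def by (simp add: Re_sum)

lemma mvec_scaleR: "A *v ((c::real) *\<^sub>R v) = c *\<^sub>R (A *v (v :: complex^'m))"
  unfolding matrix_vector_mult_def vec_eq_iff vector_scaleR_component unfolding scaleR_conv_of_real by (simp add: sum_distrib_left mult_ac)

lemma mvec_add: "A *v (u + v) = A *v u + A *v (v :: complex^'m)"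
  by (simp add: matrix_vector_right_distrib)

lemma mvec_diff: "A *v (u - v) = A *v u - A *v (v :: complex^'m)"
  by (simp add: matrix_vector_mult_diff_distrib)

lemma linear_mvec: "linear (\<lambda>v::complex^'m. (A::complex^'m^'m) *v v)"
  by (rule linearI) (simp_all add: mvec_add mvec_scaleR)

lemma cont_mvec: "continuous_on S (\<lambda>v::complex^'m. (A::complex^'m^'m) *v v)"
  by (rule linear_continuous_on[OF linear_conv_bounded_linear[THEN iffD1, OF linear_mvec]])

lemma sa_inner:
  assumes "adj A = A"
  shows "inner (A *v u) v = inner u (A *v v)"
  unfolding inner_cinner cinner_adj assms ..

lemma quad_zero:
  fixes a b :: real
  assumes "\<And>e. a * e + b * e^2 \<le> 0"
  shows "a = 0"
proof (rule ccontr)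
  assume a: "a \<noteq> 0"
  define k where "k = \<bar>b\<bar> + 1"
  define e where "e = a / k"
  have pos: "k > 0" "k + b > 0" unfolding k_def by auto
  have "a * e + b * e^2 = a^2 * (k + b) / k^2"
    unfolding e_def using pos by (simp add: field_simps power2_eq_square)
  moreover have "a^2 * (k + b) / k^2 > 0"
    using a pos by (intro divide_pos_pos mult_pos_pos) auto
  ultimately show False using assms[of e] by linarith
qed

lemma var_eig:
  fixes A :: "complex^'m^'m" and T :: "(complex^'m) set"
  assumes sa: "adj A = A" and T: "subspace T" and v0: "v0 \<in> T" "v0 \<noteq> 0"
    and inv: "\<And>v. v \<in> T \<Longrightarrow> A *v v \<in> T"
  shows "\<exists>v\<in>T. v \<noteq> 0 \<and> (\<exists>l::real. A *v v = l *\<^sub>R v)"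
proof -
  define S where "S = T \<inter> sphere 0 1"
  define q where "q = (\<lambda>v::complex^'m. inner (A *v v) v)"
  have "compact S" unfolding S_def
    by (subst Int_commute) (intro compact_Int_closed compact_sphere closed_subspace[OF T])
  moreover have "S \<noteq> {}"
  proof -
    have "(1 / norm v0) *\<^sub>R v0 \<in> S" unfolding S_def
      using v0 T by (auto simp: subspace_scale)
    then show ?thesis by blast
  qed
  moreover have "continuous_on S q" unfolding q_def
    by (intro continuous_intros cont_mvec)
  ultimately obtain v where vS: "v \<in> S" and vmax: "\<And>w. w \<in> S \<Longrightarrow> q w \<le> q v"
    using continuous_attains_sup by metis
  define l where "l = q v"
  have vT: "v \<in> T" and nv: "norm v = 1" using vS by (auto simp: S_def)
  have qscale: "q (c *\<^sub>R w) = c^2 * q w" for c w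
    unfolding q_def by (simp add: mvec_scaleR power2_eq_square)
  have bound: "q w \<le> l * (norm w)^2" if "w \<in> T" for w
  proof (cases "w = 0")
    case True then show ?thesis by (simp add: q_def)
  next
    case False
    have "(1 / norm w) *\<^sub>R w \<in> S" unfolding S_def using that False T by (auto simp: subspace_scale)
    then have "q ((1 / norm w) *\<^sub>R w) \<le> l" using vmax l_def by blast
    then have "(1 / norm w)^2 * q w \<le> l" by (simp add: qscale)
    then show ?thesis using False by (simp add: field_simps power2_eq_square)
  qed
  have orth: "inner (A *v v - l *\<^sub>R v) w = 0" if wT: "w \<in> T" for w
  proof -
    have key: "2 * inner (A *v v - l *\<^sub>R v) w * e + (q w - l * (norm w)^2) * e^2 \<le> 0" for e
    proof -
      have "v + e *\<^sub>R w \<in> T" using T vT wT by (simp add: subspace_add subspace_scale)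
      then have b: "q (v + e *\<^sub>R w) \<le> l * (norm (v + e *\<^sub>R w))^2" by (rule bound)
      have e1: "q (v + e *\<^sub>R w) = l + 2 * e * inner (A *v v) w + e^2 * q w"
        unfolding q_def l_def using sa_inner[OF sa, of w v]
        by (simp add: mvec_add mvec_scaleR inner_add_left inner_add_right power2_eq_square
            inner_commute algebra_simps)
      have vv: "inner v v = 1" using nv by (metis power2_norm_eq_inner power_one)
      have e2: "(norm (v + e *\<^sub>R w))^2 = 1 + 2 * e * inner v w + e^2 * (norm w)^2"
        unfolding power2_norm_eq_inner using vv by (simp add: inner_add_left inner_add_right
            inner_commute power2_eq_square algebra_simps)
      show ?thesis using b unfolding e1 e2
        by (simp add: inner_diff_left algebra_simps power2_eq_square)
    qed
    have "2 * inner (A *v v - l *\<^sub>R v) w = 0"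
      by (rule quad_zero[of _ "q w - l * (norm w)^2"]) (use key in \<open>simp add: mult.commute\<close>)
    then show ?thesis by simp
  qed
  have "A *v v - l *\<^sub>R v \<in> T" using T vT inv by (simp add: subspace_diff subspace_scale)
  then have "inner (A *v v - l *\<^sub>R v) (A *v v - l *\<^sub>R v) = 0" by (rule orth)
  then have "A *v v = l *\<^sub>R v" by simp
  then show ?thesis using vT nv by (intro bexI[of _ v]) auto
qed

lemma joint_eig_in:
  fixes X :: "'k \<Rightarrow> complex^'m^'m" and T :: "(complex^'m) set"
  assumes sa: "\<And>i. adj (X i) = X i" and comm: "\<And>i j. X i ** X j = X j ** X i"
    and T: "subspace T" and v0: "v0 \<in> T" "v0 \<noteq> 0"
    and inv: "\<And>i v. v \<in> T \<Longrightarrow> X i *v v \<in> T"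
  shows "\<exists>v\<in>T. v \<noteq> 0 \<and> (\<forall>i. \<exists>l::real. X i *v v = l *\<^sub>R v)"
proof -
  define P where "P = (\<lambda>T'. subspace T' \<and> T' \<subseteq> T \<and> (\<exists>v\<in>T'. v \<noteq> 0) \<and> (\<forall>i. \<forall>v\<in>T'. X i *v v \<in> T'))"
  have "P T" unfolding P_def using T v0 inv by blast
  then obtain T0 where PT0: "P T0" and minT0: "\<And>T'. P T' \<Longrightarrow> dim T0 \<le> dim T'"
    using ex_has_least_nat[of P T dim] by blast
  have T0: "subspace T0" "T0 \<subseteq> T" "\<exists>v\<in>T0. v \<noteq> 0" "\<And>i v. v \<in> T0 \<Longrightarrow> X i *v v \<in> T0"
    using PT0 unfolding P_def by blast+
  have scal: "\<forall>i. \<exists>l::real. \<forall>w\<in>T0. X i *v w = l *\<^sub>R w"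
  proof
    fix i
    obtain v1 where v1: "v1 \<in> T0" "v1 \<noteq> 0" using T0(3) by blast
    obtain v l where v: "v \<in> T0" "v \<noteq> 0" and vl: "X i *v v = l *\<^sub>R v"
      using var_eig[OF sa[of i] T0(1) v1 T0(4)] by blast
    define E where "E = {w \<in> T0. X i *v w = l *\<^sub>R w}"
    have sE: "subspace E" unfolding subspace_def
    proof (intro conjI ballI allI)
      show "0 \<in> E" using T0(1) by (simp add: E_def subspace_0)
      fix u w assume u: "u \<in> E" and w: "w \<in> E"
      then show "u + w \<in> E" using T0(1) unfolding E_def
        by (simp add: subspace_add mvec_add scaleR_add_right)
    next
      fix c :: real and w assume w: "w \<in> E"
      then show "c *\<^sub>R w \<in> E" using T0(1) unfolding E_def
        by (simp add: subspace_scale mvec_scaleR)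
    qed
    have invE: "X j *v w \<in> E" if "w \<in> E" for j w
    proof -
      have "X i *v (X j *v w) = X j *v (X i *v w)"
        by (simp add: matrix_vector_mul_assoc comm)
      also have "\<dots> = l *\<^sub>R (X j *v w)" using that by (simp add: E_def mvec_scaleR)
      finally show ?thesis using that T0(4) unfolding E_def by blast
    qed
    have vE: "v \<in> E" using v vl by (simp add: E_def)
    have "E \<subseteq> T" using T0(2) by (auto simp: E_def)
    then have "P E" unfolding P_def using sE invE vE v(2) by blast
    then have "dim T0 \<le> dim E" by (rule minT0)
    moreover have "E \<subseteq> T0" by (auto simp: E_def)
    ultimately have "E = T0" using subspace_dim_equal[OF sE T0(1)] by blast
    then show "\<exists>l::real. \<forall>w\<in>T0. X i *v w = l *\<^sub>R w" unfolding E_def by blast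
  qed
  obtain v where "v \<in> T0" "v \<noteq> 0" using T0(3) by blast
  then show ?thesis using scal T0(2) by blast
qed

definition jeig :: "('k \<Rightarrow> complex^'m^'m) \<Rightarrow> complex^'m \<Rightarrow> bool" where
  "jeig X v \<longleftrightarrow> (\<forall>i. \<exists>l::real. X i *v v = l *\<^sub>R v)"

definition orthonormal :: "(complex^'m) set \<Rightarrow> bool" where
  "orthonormal B \<longleftrightarrow> (\<forall>b\<in>B. \<forall>c\<in>B. cinner b c = (if b = c then 1 else 0))"

lemma ii_smult_scaleR: "(c::complex) *s (b::complex^'m) = Re c *\<^sub>R b + Im c *\<^sub>R (\<i> *s b)"
proof -
  have "c * z = Re c *\<^sub>R z + Im c *\<^sub>R (\<i> * z)" for z
    by (subst complex_eq[of c]) (simp add: scaleR_conv_of_real algebra_simps)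
  then show ?thesis unfolding vec_eq_iff by simp
qed

lemma step_vec:
  fixes X :: "'k \<Rightarrow> complex^'m^'m"
  assumes sa: "\<And>i. adj (X i) = X i" and comm: "\<And>i j. X i ** X j = X j ** X i"
    and B: "finite B" "orthonormal B" "\<forall>b\<in>B. jeig X b" and cB: "card B < CARD('m)"
  shows "\<exists>v. cinner v v = 1 \<and> (\<forall>b\<in>B. cinner v b = 0) \<and> jeig X v"
proof -
  define T where "T = {v. \<forall>b\<in>B. cinner v b = 0}"
  have sT: "subspace T" unfolding subspace_def T_def
    by (simp add: cinner_add_left cinner_scaleR_left)
  have invT: "X i *v v \<in> T" if "v \<in> T" for i v
  proof -
    { fix b assume b: "b \<in> B"
      obtain l where l: "X i *v b = l *\<^sub>R b" using B(3) b unfolding jeig_def by blast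
      have "cinner (X i *v v) b = cinner v (X i *v b)" by (simp add: cinner_adj sa)
      also have "\<dots> = 0" using that b unfolding l T_def by (simp add: cinner_scaleR_right)
      finally have "cinner (X i *v v) b = 0" . }
    then show ?thesis by (simp add: T_def)
  qed
  have "\<exists>v0\<in>T. v0 \<noteq> 0"
  proof (rule ccontr)
    assume "\<not> ?thesis"
    then have T0: "\<And>v. v \<in> T \<Longrightarrow> v = 0" by blast
    have rep: "v = (\<Sum>b\<in>B. cinner v b *s b)" for v
    proof -
      have "v - (\<Sum>b\<in>B. cinner v b *s b) \<in> T"
      proof -
        { fix c assume c: "c \<in> B"
          have "cinner (\<Sum>b\<in>B. cinner v b *s b) c = (\<Sum>b\<in>B. cinner v b * cinner b c)"
            by (simp add: cinner_sum_left[OF B(1)] cinner_smult_left)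
          also have "\<dots> = (\<Sum>b\<in>B. if b = c then cinner v b else 0)"
            using B(2) c unfolding orthonormal_def by (intro sum.cong) auto
          also have "\<dots> = cinner v c" using c B(1) by simp
          finally have "cinner (v - (\<Sum>b\<in>B. cinner v b *s b)) c = 0"
            by (simp add: cinner_diff_left) }
        then show ?thesis by (simp add: T_def)
      qed
      then have "v - (\<Sum>b\<in>B. cinner v b *s b) = 0" by (rule T0)
      then show ?thesis by (simp only: right_minus_eq)
    qed
    define W where "W = B \<union> (\<lambda>b. \<i> *s b) ` B"
    have "UNIV \<subseteq> span W"
    proof
      fix v :: "complex^'m"
      have "(\<Sum>b\<in>B. cinner v b *s b) \<in> span W"
      proof (rule span_sum)
        fix b assume "b \<in> B"
        then have "b \<in> W" "\<i> *s b \<in> W" unfolding W_def by auto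
        then have "b \<in> span W" "\<i> *s b \<in> span W" by (auto intro: span_base)
        then show "cinner v b *s b \<in> span W"
          by (subst ii_smult_scaleR) (intro span_add span_scale)
      qed
      then show "v \<in> span W" by (rule ssubst[OF rep[of v]])
    qed
    then have "dim (UNIV :: (complex^'m) set) \<le> card W"
      by (rule dim_le_card) (simp add: W_def B(1))
    also have "card W \<le> card B + card B" unfolding W_def
      by (rule order_trans[OF card_Un_le]) (simp add: card_image_le B(1))
    finally have "DIM(complex^'m) \<le> 2 * card B" by simp
    then show False using cB by simp
  qed
  then obtain v0 where v0: "v0 \<in> T" "v0 \<noteq> 0" by blast
  have "\<exists>v\<in>T. v \<noteq> 0 \<and> (\<forall>i. \<exists>l::real. X i *v v = l *\<^sub>R v)"
    by (rule joint_eig_in[OF sa comm sT v0(1) v0(2)]) (rule invT)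
  then obtain v where v: "v \<in> T" "v \<noteq> 0" and ev: "\<forall>i. \<exists>l::real. X i *v v = l *\<^sub>R v"
    by blast
  define u where "u = (1 / norm v) *\<^sub>R v"
  have "cinner u u = 1" unfolding u_def cinner_self using v by simp
  moreover have "\<forall>b\<in>B. cinner u b = 0" using v unfolding u_def T_def
    by (simp add: cinner_scaleR_left)
  moreover have "jeig X u" unfolding jeig_def u_def
  proof
    fix i obtain l where "X i *v v = l *\<^sub>R v" using ev by blast
    then show "\<exists>l::real. X i *v ((1 / norm v) *\<^sub>R v) = l *\<^sub>R ((1 / norm v) *\<^sub>R v)"
      by (intro exI[of _ l]) (simp add: mvec_scaleR)
  qed
  ultimately show ?thesis by blast
qed

lemma cinner_cnj: "cnj (cinner u v) = cinner v u"
  by (simp add: cinner_def mult.commute)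

lemma family_exists:
  fixes X :: "'k \<Rightarrow> complex^'m^'m"
  assumes sa: "\<And>i. adj (X i) = X i" and comm: "\<And>i j. X i ** X j = X j ** X i"
  shows "k \<le> CARD('m) \<Longrightarrow> \<exists>B. finite B \<and> card B = k \<and> orthonormal B \<and> (\<forall>b\<in>B. jeig X b)"
proof (induction k)
  case 0
  show ?case by (intro exI[of _ "{}"]) (simp add: orthonormal_def)
next
  case (Suc k)
  then obtain B where B: "finite B" "card B = k" "orthonormal B" "\<forall>b\<in>B. jeig X b" by auto
  have "card B < CARD('m)" using Suc.prems B(2) by simp
  then obtain v where v: "cinner v v = 1" "\<forall>b\<in>B. cinner v b = 0" "jeig X v"
    using step_vec[where X=X, OF _ _ B(1) B(3) B(4)] sa comm by blast
  have vB: "v \<notin> B" using v(1) v(2) by force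
  have vb2: "\<forall>b\<in>B. cinner b v = 0" using v(2) by (metis cinner_cnj complex_cnj_zero)
  have "orthonormal (insert v B)" unfolding orthonormal_def
  proof (intro ballI)
    fix b c assume b: "b \<in> insert v B" and c: "c \<in> insert v B"
    show "cinner b c = (if b = c then 1 else 0)"
    proof (cases "b = v")
      case True
      then show ?thesis using c v vB by auto
    next
      case False
      then have bB: "b \<in> B" using b by auto
      show ?thesis
      proof (cases "c = v")
        case True then show ?thesis using bB vb2 vB by auto
      next
        case False then show ?thesis using bB c B(3) unfolding orthonormal_def by auto
      qed
    qed
  qed
  then show ?case using B vB v(3)
    by (intro exI[of _ "insert v B"]) auto
qed

theorem spectral_joint:
  fixes X :: "'k \<Rightarrow> complex^'m^'m"
  assumes sa: "\<And>i. adj (X i) = X i" and comm: "\<And>i j. X i ** X j = X j ** X i"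
  shows "\<exists>U D. unitary_mat U \<and> (\<forall>i. X i = U ** diag_mat (D i) ** adj U)"
proof -
  have "\<exists>B. finite B \<and> card B = CARD('m) \<and> orthonormal B \<and> (\<forall>b\<in>B. jeig X b)"
    by (rule family_exists[where X=X]) (rule sa, rule comm, simp)
  then obtain B where B: "finite B" "card B = CARD('m)" "orthonormal B" "\<forall>b\<in>B. jeig X b"
    by auto
  obtain s where s: "bij_betw s (UNIV :: 'm set) B"
    using finite_same_card_bij[of "UNIV :: 'm set" B] B by auto
  have sB: "s j \<in> B" for j using s by (auto simp: bij_betw_def)
  have sinj: "s i = s j \<longleftrightarrow> i = j" for i j using s by (auto simp: bij_betw_def inj_on_def)
  define U :: "complex^'m^'m" where "U = (\<chi> r j. s j $ r)"
  have colU: "column j U = s j" for j by (simp add: U_def column_def vec_eq_iff)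
  have UU: "adj U ** U = mat 1"
  proof -
    have "(adj U ** U) $ i $ j = cinner (s j) (s i)" for i j
      unfolding matrix_matrix_mult_def cinner_def U_def by (simp add: mult.commute)
    also have "cinner (s j) (s i) = (if i = j then 1 else 0)" for i j
      using B(3) sB[of i] sB[of j] sinj[of j i] unfolding orthonormal_def by auto
    finally show ?thesis by (simp add: vec_eq_iff mat_def)
  qed
  then have UU2: "U ** adj U = mat 1" using matrix_left_right_inverse by blast
  have unit: "unitary_mat U" unfolding unitary_mat_def using UU UU2 by simp
  define D where "D = (\<lambda>i j. SOME l::real. X i *v s j = l *\<^sub>R s j)"
  have D: "X i *v s j = D i j *\<^sub>R s j" for i j
  proof -
    have "\<exists>l::real. X i *v s j = l *\<^sub>R s j" using B(4) sB[of j] unfolding jeig_def by blast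
    then show ?thesis unfolding D_def by (rule someI_ex)
  qed
  have XU: "X i ** U = U ** diag_mat (D i)" for i
  proof -
    have "(X i ** U) $ r $ j = (U ** diag_mat (D i)) $ r $ j" for r j
    proof -
      have "(X i ** U) $ r $ j = (X i *v s j) $ r"
        unfolding matrix_matrix_mult_def matrix_vector_mult_def U_def by simp
      also have "\<dots> = complex_of_real (D i j) * U $ r $ j"
        unfolding D vector_scaleR_component by (simp add: U_def scaleR_conv_of_real)
      also have "\<dots> = (U ** diag_mat (D i)) $ r $ j"
        unfolding matrix_matrix_mult_def diag_mat_def
        by (simp add: if_distrib if_distribR mult.commute cong: if_cong)
      finally show ?thesis .
    qed
    then show ?thesis by (simp add: vec_eq_iff)
  qed
  have "X i = U ** diag_mat (D i) ** adj U" for i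
  proof -
    have "X i = X i ** (U ** adj U)" using UU2 by simp
    also have "\<dots> = U ** diag_mat (D i) ** adj U" by (simp add: matrix_mul_assoc XU)
    finally show ?thesis .
  qed
  then show ?thesis using unit by blast
qed

definition topk :: "nat \<Rightarrow> ('m \<Rightarrow> real) \<Rightarrow> real" where
  "topk k d = sum_list (take k (rev (sorted_list_of_multiset (image_mset d (mset_set (UNIV :: 'm set))))))"

lemma topk_set:
  fixes d :: "'m::finite \<Rightarrow> real"
  assumes k: "k \<le> CARD('m)"
  shows "\<exists>L. card L = k \<and> topk k d = sum d L \<and> (\<forall>l\<in>L. \<forall>l'. l' \<notin> L \<longrightarrow> d l' \<le> d l)"
proof -
  obtain zs where zs: "set zs = (UNIV :: 'm set)" "distinct zs"
    using finite_distinct_list[of "UNIV :: 'm set"] by auto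
  define ws where "ws = sort_key d zs"
  have ws: "distinct ws" "set ws = UNIV" "mset ws = mset zs" "sorted (map d ws)"
    using zs by (simp_all add: ws_def)
  have "sorted_list_of_multiset (image_mset d (mset_set (UNIV :: 'm set))) = sort (map d zs)"
    using zs by (metis mset_map mset_set_set sorted_list_of_multiset_mset)
  also have "\<dots> = map d ws"
    by (rule properties_for_sort) (simp_all add: ws(3)[symmetric] ws(4))
  finally have eq: "sorted_list_of_multiset (image_mset d (mset_set (UNIV :: 'm set))) = map d ws" .
  define rs where "rs = rev ws"
  have rs: "distinct rs" "set rs = UNIV" "length rs = CARD('m)"
    using ws zs unfolding rs_def by (simp_all add: distinct_card[symmetric])
  have srt: "sorted_wrt (\<lambda>a b. d b \<le> d a) rs"
    using ws(4) unfolding rs_def sorted_wrt_rev by (simp add: sorted_wrt_map)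
  define L where "L = set (take k rs)"
  have "topk k d = sum_list (map d (take k rs))"
    unfolding topk_def eq rs_def by (simp add: take_map rev_map)
  also have "\<dots> = sum d L" unfolding L_def
    using rs(1) by (simp add: sum_list_distinct_conv_sum_set)
  finally have t: "topk k d = sum d L" .
  have c: "card L = k" unfolding L_def using rs k by (simp add: distinct_card)
  have "\<forall>l\<in>L. \<forall>l'. l' \<notin> L \<longrightarrow> d l' \<le> d l"
  proof (intro ballI allI impI)
    fix l l' assume l: "l \<in> L" and l': "l' \<notin> L"
    have "l' \<in> set (drop k rs)" using l' rs(2) unfolding L_def
      by (metis UNIV_I Un_iff append_take_drop_id set_append)
    moreover have "sorted_wrt (\<lambda>a b. d b \<le> d a) (take k rs @ drop k rs)" using srt by simp
    ultimately show "d l' \<le> d l" using l unfolding L_def sorted_wrt_append by blast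
  qed
  then show ?thesis using t c by blast
qed

lemma sum_split_compl:
  fixes f :: "'m::finite \<Rightarrow> real"
  shows "(\<Sum>l\<in>UNIV. f l) = (\<Sum>l\<in>L. f l) + (\<Sum>l\<in>-L. f l)"
proof -
  have "(\<Sum>l\<in>UNIV. f l) = (\<Sum>l\<in>L \<union> -L. f l)" by (simp add: Compl_partition)
  also have "\<dots> = (\<Sum>l\<in>L. f l) + (\<Sum>l\<in>-L. f l)" by (rule sum.union_disjoint) auto
  finally show ?thesis .
qed

lemma topk_bound:
  fixes d w :: "'m::finite \<Rightarrow> real"
  assumes w01: "\<And>l. 0 \<le> w l" "\<And>l. w l \<le> 1" and ws: "(\<Sum>l\<in>UNIV. w l) = real (card L)"
    and thr: "\<forall>l\<in>L. \<forall>l'. l' \<notin> L \<longrightarrow> d l' \<le> d l"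
  shows "(\<Sum>l\<in>UNIV. d l * w l) \<le> sum d L"
proof (cases "L = {}")
  case True
  then have "(\<Sum>l\<in>UNIV. w l) = 0" using ws by simp
  then have "\<forall>l\<in>UNIV. w l = 0" using w01(1) by (simp add: sum_nonneg_eq_0_iff)
  then show ?thesis using True by simp
next
  case False
  define th where "th = Min (d ` L)"
  have fin: "finite L" by simp
  have thL: "\<And>l. l \<in> L \<Longrightarrow> th \<le> d l" unfolding th_def using fin by simp
  have thN: "\<And>l. l \<notin> L \<Longrightarrow> d l \<le> th"
  proof -
    fix l assume "l \<notin> L"
    have "th \<in> d ` L" unfolding th_def using False fin by (intro Min_in) auto
    then obtain m where "m \<in> L" "th = d m" by blast
    then show "d l \<le> th" using thr \<open>l \<notin> L\<close> by auto
  qed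
  have split: "(\<Sum>l\<in>UNIV. d l * w l) - sum d L
      = (\<Sum>l\<in>L. d l * (w l - 1)) + (\<Sum>l\<in>-L. d l * w l)"
  proof -
    have "(\<Sum>l\<in>UNIV. d l * w l) = (\<Sum>l\<in>L. d l * w l) + (\<Sum>l\<in>-L. d l * w l)"
      by (rule sum_split_compl)
    then show ?thesis by (simp add: sum_subtractf right_diff_distrib)
  qed
  have b1: "(\<Sum>l\<in>L. d l * (w l - 1)) \<le> (\<Sum>l\<in>L. th * (w l - 1))"
  proof (rule sum_mono)
    fix l assume "l \<in> L"
    then have "th \<le> d l" "w l - 1 \<le> 0" using thL w01 by auto
    then show "d l * (w l - 1) \<le> th * (w l - 1)" by (rule mult_right_mono_neg)
  qed
  have b2: "(\<Sum>l\<in>-L. d l * w l) \<le> (\<Sum>l\<in>-L. th * w l)"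
  proof (rule sum_mono)
    fix l assume "l \<in> -L"
    then have "d l \<le> th" "0 \<le> w l" using thN w01 by auto
    then show "d l * w l \<le> th * w l" by (rule mult_right_mono)
  qed
  have "(\<Sum>l\<in>L. th * (w l - 1)) + (\<Sum>l\<in>-L. th * w l) = th * ((\<Sum>l\<in>L. w l) + (\<Sum>l\<in>-L. w l) - card L)"
    by (simp add: sum_distrib_left[symmetric] sum_subtractf algebra_simps)
  also have "(\<Sum>l\<in>L. w l) + (\<Sum>l\<in>-L. w l) = (\<Sum>l\<in>UNIV. w l)"
    by (rule sum_split_compl[symmetric])
  finally have "(\<Sum>l\<in>L. th * (w l - 1)) + (\<Sum>l\<in>-L. th * w l) = 0" using ws by simp
  then show ?thesis using split b1 b2 by linarith
qed

lemma kyfan: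
  fixes U V :: "complex^'m^'m"
  assumes U: "unitary_mat U" and V: "unitary_mat V" and J: "card J = k" and k: "k \<le> CARD('m)"
  shows "(\<Sum>j\<in>J. Re (cinner ((V ** diag_mat d ** adj V) *v column j U) (column j U))) \<le> topk k d"
proof -
  define W where "W = adj V ** U"
  have W: "unitary_mat W" unfolding W_def by (rule unitary_mult[OF unitary_adj[OF V] U])
  have col: "(adj V *v column j U) $ l = W $ l $ j" for j l
    unfolding W_def matrix_matrix_mult_def matrix_vector_mult_def column_def by simp
  define w where "w = (\<lambda>l. \<Sum>j\<in>J. (cmod (W $ l $ j))^2)"
  have "(\<Sum>j\<in>J. Re (cinner ((V ** diag_mat d ** adj V) *v column j U) (column j U)))
      = (\<Sum>j\<in>J. \<Sum>l\<in>UNIV. d l * (cmod (W $ l $ j))^2)"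
    unfolding qf_diag col by simp
  also have "\<dots> = (\<Sum>l\<in>UNIV. d l * w l)"
    unfolding w_def by (simp add: sum_distrib_left sum.swap[of _ J])
  also obtain L where L: "card L = k" "topk k d = sum d L" "\<forall>l\<in>L. \<forall>l'. l' \<notin> L \<longrightarrow> d l' \<le> d l"
    using topk_set[OF k] by blast
  have "(\<Sum>l\<in>UNIV. d l * w l) \<le> sum d L"
  proof (rule topk_bound[OF _ _ _ L(3)])
    fix l show "0 \<le> w l" unfolding w_def by (simp add: sum_nonneg)
    have "w l \<le> (\<Sum>j\<in>UNIV. (cmod (W $ l $ j))^2)" unfolding w_def
      by (rule sum_mono2) auto
    then show "w l \<le> 1" using unitary_rows[OF W] by simp
  next
    have "(\<Sum>l\<in>UNIV. w l) = (\<Sum>j\<in>J. \<Sum>l\<in>UNIV. (cmod (W $ l $ j))^2)"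
      unfolding w_def by (rule sum.swap)
    also have "\<dots> = real (card J)" using unitary_colsum[OF W] by simp
    finally show "(\<Sum>l\<in>UNIV. w l) = real (card L)" using J L(1) by simp
  qed
  finally show ?thesis using L(2) by simp
qed

lemma interval_side:
  fixes I :: "real set"
  assumes "is_interval I" "x \<notin> I"
  shows "(\<forall>z\<in>I. x < z) \<or> (\<forall>z\<in>I. z < x)"
proof (rule ccontr)
  assume "\<not> ?thesis"
  then obtain a b where ab: "a \<in> I" "b \<in> I" "a \<le> x" "x \<le> b" by (auto simp: not_less)
  then have "x \<in> I" using assms(1) unfolding is_interval_1 by blast
  then show False using assms(2) by simp
qed

lemma inner_pair_split: "inner a (x, y) = inner (fst a) x + inner (snd a) y"
  by (cases a) (simp add: inner_Pair)

lemma jensen_abstract: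
  fixes M :: "'t measure" and f :: "real^'n \<Rightarrow> real" and I :: "'n \<Rightarrow> real set"
    and c :: "'t \<Rightarrow> real" and phi :: "'n \<Rightarrow> 't \<Rightarrow> real" and psi :: "'t \<Rightarrow> real"
    and lam :: "real^'n"
  defines "K \<equiv> {z. \<forall>i. z $ i \<in> I i}"
  assumes intervals: "\<And>i. is_interval (I i)"
    and f_cont: "continuous_on K f" and f_convex: "convex_on K f"
    and ic: "integrable M c" and iphi: "\<And>i. integrable M (phi i)" and ipsi: "integrable M psi"
    and c1: "integral\<^sup>L M c = 1" and philam: "\<And>i. integral\<^sup>L M (phi i) = lam $ i"
    and pw: "\<And>t. \<exists>p (mu :: 'm::finite \<Rightarrow> real^'n). (\<forall>l. 0 \<le> p l \<and> mu l \<in> K) \<and> c t = (\<Sum>l\<in>UNIV. p l)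
                \<and> (\<forall>i. phi i t = (\<Sum>l\<in>UNIV. p l * mu l $ i)) \<and> psi t = (\<Sum>l\<in>UNIV. p l * f (mu l))"
  shows "lam \<in> K \<and> f lam \<le> integral\<^sup>L M psi"
proof -
  have lamK: "lam \<in> K"
  proof -
    { fix i
      have "lam $ i \<in> I i"
      proof (rule ccontr)
        assume nI: "lam $ i \<notin> I i"
        define h where "h = (\<lambda>t. phi i t - lam $ i * c t)"
        have ih: "integrable M h" unfolding h_def using iphi ic by auto
        have inth: "integral\<^sup>L M h = 0" unfolding h_def using iphi ic c1 philam by simp
        from interval_side[OF intervals[of i] nI]
        consider "\<forall>z\<in>I i. lam $ i < z" | "\<forall>z\<in>I i. z < lam $ i" by blast
        then show False
        proof cases
          case 1
          have hpos: "0 \<le> h t" and hzero: "h t = 0 \<Longrightarrow> c t = 0" for t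
          proof -
            obtain p and mu :: "'m \<Rightarrow> real^'n" where pm: "\<forall>l. 0 \<le> p l \<and> mu l \<in> K" "c t = (\<Sum>l\<in>UNIV. p l)"
              "\<forall>i. phi i t = (\<Sum>l\<in>UNIV. p l * mu l $ i)" using pw[of t] by blast
            have ht: "h t = (\<Sum>l\<in>UNIV. p l * (mu l $ i - lam $ i))"
              unfolding h_def pm(2) pm(3)[rule_format] by (simp add: sum_distrib_left sum_subtractf algebra_simps)
            have gt: "mu l $ i - lam $ i > 0" for l using 1 pm(1) unfolding K_def by auto
            have nn: "0 \<le> p l * (mu l $ i - lam $ i)" for l using pm(1) gt[of l] by simp
            show "0 \<le> h t" unfolding ht by (rule sum_nonneg) (use nn in auto)
            assume "h t = 0"
            then have "\<forall>l\<in>UNIV. p l * (mu l $ i - lam $ i) = 0"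
              unfolding ht using nn by (subst sum_nonneg_eq_0_iff[symmetric]) auto
            then have z: "p l * (mu l $ i - lam $ i) = 0" for l by simp
            have "\<forall>l. p l = 0"
            proof
              fix l show "p l = 0" using z[of l] gt[of l] by simp
            qed
            then show "c t = 0" using pm(2) by simp
          qed
          have "AE t in M. h t = 0"
            using integral_nonneg_eq_0_iff_AE[OF ih] hpos inth by auto
          then have "AE t in M. c t = 0" by (rule AE_mp) (intro AE_I2 impI hzero)
          then have "integral\<^sup>L M c = 0" by (rule integral_eq_zero_AE)
          then show False using c1 by simp
        next
          case 2
          have hpos: "0 \<le> - h t" and hzero: "- h t = 0 \<Longrightarrow> c t = 0" for t
          proof -
            obtain p and mu :: "'m \<Rightarrow> real^'n" where pm: "\<forall>l. 0 \<le> p l \<and> mu l \<in> K" "c t = (\<Sum>l\<in>UNIV. p l)"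
              "\<forall>i. phi i t = (\<Sum>l\<in>UNIV. p l * mu l $ i)" using pw[of t] by blast
            have ht: "- h t = (\<Sum>l\<in>UNIV. p l * (lam $ i - mu l $ i))"
              unfolding h_def pm(2) pm(3)[rule_format] by (simp add: sum_distrib_left sum_subtractf algebra_simps)
            have gt: "lam $ i - mu l $ i > 0" for l using 2 pm(1) unfolding K_def by auto
            have nn: "0 \<le> p l * (lam $ i - mu l $ i)" for l using pm(1) gt[of l] by simp
            show "0 \<le> - h t" unfolding ht by (rule sum_nonneg) (use nn in auto)
            assume "- h t = 0"
            then have "\<forall>l\<in>UNIV. p l * (lam $ i - mu l $ i) = 0"
              unfolding ht using nn by (subst sum_nonneg_eq_0_iff[symmetric]) auto
            then have z: "p l * (lam $ i - mu l $ i) = 0" for l by simp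
            have "\<forall>l. p l = 0"
            proof
              fix l show "p l = 0" using z[of l] gt[of l] by simp
            qed
            then show "c t = 0" using pm(2) by simp
          qed
          have ih': "integrable M (\<lambda>t. - h t)" using ih by simp
          have "AE t in M. - h t = 0"
            using integral_nonneg_eq_0_iff_AE[OF ih'] hpos inth by auto
          then have "AE t in M. c t = 0" by (rule AE_mp) (intro AE_I2 impI hzero)
          then have "integral\<^sup>L M c = 0" by (rule integral_eq_zero_AE)
          then show False using c1 by simp
        qed
      qed }
    then show ?thesis unfolding K_def by blast
  qed
  define E where "E = epigraph K f"
  define Psi where "Psi = integral\<^sup>L M psi"
  have inE: "(lam, Psi) \<in> closure E"
  proof (rule ccontr)
    assume nE: "(lam, Psi) \<notin> closure E"
    have "convex (closure E)" unfolding E_def using f_convex by (simp add: convex_epigraph)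
    then obtain a b where ab: "inner a (lam, Psi) < b" "\<And>x. x \<in> closure E \<Longrightarrow> inner a x > b"
      using separating_hyperplane_closed_point[OF _ closed_closure nE] by blast
    define g where "g = (\<lambda>t. (\<Sum>i\<in>UNIV. fst a $ i * phi i t) + snd a * psi t)"
    have ig: "integrable M g" unfolding g_def using iphi ipsi by auto
    have intg: "integral\<^sup>L M g = inner a (lam, Psi)"
      unfolding g_def Psi_def using iphi ipsi philam
      by (simp add: integral_sum inner_pair_split inner_vec_def)
    have gb: "b * c t \<le> g t" for t
    proof -
      obtain p and mu :: "'m \<Rightarrow> real^'n" where pm: "\<forall>l. 0 \<le> p l \<and> mu l \<in> K" "c t = (\<Sum>l\<in>UNIV. p l)"
        "\<forall>i. phi i t = (\<Sum>l\<in>UNIV. p l * mu l $ i)" "psi t = (\<Sum>l\<in>UNIV. p l * f (mu l))"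
        using pw[of t] by blast
      have "g t = (\<Sum>i\<in>UNIV. \<Sum>l\<in>UNIV. p l * (fst a $ i * mu l $ i)) + (\<Sum>l\<in>UNIV. p l * (snd a * f (mu l)))"
        unfolding g_def pm(3)[rule_format] pm(4) by (simp add: sum_distrib_left mult_ac)
      also have "(\<Sum>i\<in>UNIV. \<Sum>l\<in>UNIV. p l * (fst a $ i * mu l $ i)) = (\<Sum>l\<in>UNIV. \<Sum>i\<in>UNIV. p l * (fst a $ i * mu l $ i))"
        by (rule sum.swap)
      also have "(\<Sum>l\<in>UNIV. \<Sum>i\<in>UNIV. p l * (fst a $ i * mu l $ i)) + (\<Sum>l\<in>UNIV. p l * (snd a * f (mu l)))
          = (\<Sum>l\<in>UNIV. p l * inner a (mu l, f (mu l)))"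
        by (simp add: inner_pair_split inner_vec_def sum_distrib_left[symmetric] sum.distrib[symmetric] distrib_left)
      finally have "g t = (\<Sum>l\<in>UNIV. p l * inner a (mu l, f (mu l)))" .
      moreover have "b * p l \<le> p l * inner a (mu l, f (mu l))" for l
      proof -
        have "(mu l, f (mu l)) \<in> closure E" unfolding E_def
          using pm(1) by (intro closure_subset[THEN subsetD]) (simp add: mem_epigraph)
        then have "b < inner a (mu l, f (mu l))" by (rule ab(2))
        then have "p l * b \<le> p l * inner a (mu l, f (mu l))"
          using pm(1) by (intro mult_left_mono) auto
        then show ?thesis by (simp add: mult.commute)
      qed
      ultimately show ?thesis unfolding pm(2) sum_distrib_left by (simp add: sum_mono)
    qed
    have "b = integral\<^sup>L M (\<lambda>t. b * c t)" using c1 by simp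
    also have "\<dots> \<le> integral\<^sup>L M g" by (rule integral_mono) (use ic ig gb in auto)
    finally show False using intg ab(1) by simp
  qed
  obtain s where s: "\<And>n. s n \<in> E" "s \<longlonglongrightarrow> (lam, Psi)"
    using inE unfolding closure_sequential by blast
  have fs: "fst (s n) \<in> K" "f (fst (s n)) \<le> snd (s n)" for n
    using s(1)[of n] unfolding E_def epigraph_def by auto
  have t1: "(\<lambda>n. fst (s n)) \<longlonglongrightarrow> lam" using tendsto_fst[OF s(2)] by simp
  have t2: "(\<lambda>n. snd (s n)) \<longlonglongrightarrow> Psi" using tendsto_snd[OF s(2)] by simp
  have t3: "(\<lambda>n. f (fst (s n))) \<longlonglongrightarrow> f lam"
    by (rule continuous_on_tendsto_compose[OF f_cont t1 lamK]) (use fs in auto)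
  have "f lam \<le> Psi" by (rule LIMSEQ_le[OF t3 t2]) (use fs in auto)
  then show ?thesis using lamK Psi_def by simp
qed

lemma cont_mmult:
  fixes A B :: "'t::topological_space \<Rightarrow> complex^'m^'m"
  assumes "continuous_on S A" "continuous_on S B"
  shows "continuous_on S (\<lambda>t. A t ** B t)"
proof -
  have eq: "(\<lambda>t. A t ** B t) = (\<lambda>t. \<chi> r s. \<Sum>k\<in>UNIV. A t $ r $ k * B t $ k $ s)"
    by (simp add: matrix_matrix_mult_def)
  show ?thesis unfolding eq
    by (intro continuous_on_vec_lambda continuous_on_sum continuous_on_mult
        continuous_on_component assms)
qed

lemma cont_adj:
  fixes A :: "'t::topological_space \<Rightarrow> complex^'m^'m"
  assumes "continuous_on S A"
  shows "continuous_on S (\<lambda>t. adj (A t))"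
proof -
  have eq: "(\<lambda>t. adj (A t)) = (\<lambda>t. \<chi> i j. cnj (A t $ j $ i))"
    by (simp add: adj_def)
  show ?thesis unfolding eq
    by (intro continuous_on_vec_lambda continuous_on_cnj continuous_on_component assms)
qed

lemma norm_vec_le_sum: "norm (x :: 'a::real_normed_vector^'n) \<le> (\<Sum>i\<in>UNIV. norm (x $ i))"
  unfolding norm_vec_def by (rule L2_set_le_sum) simp

lemma norm_entry_le: "norm ((A :: complex^'m^'m) $ r $ s) \<le> norm A"
  using Finite_Cartesian_Product.norm_nth_le[of "A $ r" s] Finite_Cartesian_Product.norm_nth_le[of A r] by linarith

lemma norm_mat_le_entries:
  fixes A :: "complex^'m^'m"
  assumes "\<And>r s. norm (A $ r $ s) \<le> C"
  shows "norm A \<le> real (CARD('m))^2 * C"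
proof -
  have "norm A \<le> (\<Sum>r\<in>UNIV. norm (A $ r))" by (rule norm_vec_le_sum)
  also have "\<dots> \<le> (\<Sum>r\<in>(UNIV::'m set). \<Sum>s\<in>(UNIV::'m set). C)"
  proof (rule sum_mono)
    fix r
    have "norm (A $ r) \<le> (\<Sum>s\<in>UNIV. norm (A $ r $ s))" by (rule norm_vec_le_sum)
    also have "\<dots> \<le> (\<Sum>s\<in>(UNIV::'m set). C)" by (rule sum_mono) (rule assms)
    finally show "norm (A $ r) \<le> (\<Sum>s\<in>(UNIV::'m set). C)" .
  qed
  also have "\<dots> = real (CARD('m))^2 * C" by (simp add: power2_eq_square)
  finally show ?thesis .
qed

lemma norm_mmult_le:
  fixes A B :: "complex^'m^'m"
  shows "norm (A ** B) \<le> real (CARD('m))^3 * (norm A * norm B)"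
proof -
  have "norm ((A ** B) $ r $ s) \<le> real (CARD('m)) * (norm A * norm B)" for r s
  proof -
    have "norm ((A ** B) $ r $ s) = norm (\<Sum>k\<in>UNIV. A $ r $ k * B $ k $ s)"
      by (simp add: matrix_matrix_mult_def)
    also have "\<dots> \<le> (\<Sum>k\<in>UNIV. norm (A $ r $ k * B $ k $ s))" by (rule norm_sum)
    also have "\<dots> \<le> (\<Sum>k\<in>(UNIV::'m set). norm A * norm B)"
    proof (rule sum_mono)
      fix k
      have "norm (A $ r $ k * B $ k $ s) = norm (A $ r $ k) * norm (B $ k $ s)" by (rule norm_mult)
      also have "\<dots> \<le> norm A * norm B"
        by (intro mult_mono norm_entry_le) auto
      finally show "norm (A $ r $ k * B $ k $ s) \<le> norm A * norm B" .
    qed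
    also have "\<dots> = real (CARD('m)) * (norm A * norm B)" by simp
    finally show ?thesis .
  qed
  then have "norm (A ** B) \<le> real (CARD('m))^2 * (real (CARD('m)) * (norm A * norm B))"
    by (rule norm_mat_le_entries)
  then show ?thesis by (simp add: power2_eq_square power3_eq_cube mult_ac)
qed

lemma norm_adj_le:
  fixes A :: "complex^'m^'m"
  shows "norm (adj A) \<le> real (CARD('m))^2 * norm A"
  by (rule norm_mat_le_entries) (simp add: norm_entry_le)

lemma norm_sq_trace:
  fixes A :: "complex^'m^'m"
  shows "(norm A)^2 = (\<Sum>s\<in>UNIV. Re ((adj A ** A) $ s $ s))"
proof -
  have "(norm A)^2 = (\<Sum>r\<in>UNIV. (norm (A $ r))^2)"
    unfolding norm_vec_def L2_set_def by (simp add: sum_nonneg)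
  also have "\<dots> = (\<Sum>r\<in>UNIV. \<Sum>s\<in>UNIV. (cmod (A $ r $ s))^2)"
    unfolding norm_vec_def L2_set_def by (simp add: sum_nonneg)
  also have "\<dots> = (\<Sum>s\<in>UNIV. \<Sum>r\<in>UNIV. (cmod (A $ r $ s))^2)" by (rule sum.swap)
  also have "\<dots> = (\<Sum>s\<in>UNIV. Re ((adj A ** A) $ s $ s))"
    by (simp add: matrix_matrix_mult_def cnj_mult_self Re_sum)
  finally show ?thesis .
qed

lemma bl_entry: "bounded_linear (\<lambda>A::complex^'m^'m. Re (A $ s $ s))"
proof -
  have "bounded_linear (\<lambda>A::complex^'m^'m. A $ s)" by (rule bounded_linear_vec_nth)
  then have "bounded_linear (\<lambda>A::complex^'m^'m. A $ s $ s)"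
    by (rule bounded_linear_compose[OF bounded_linear_vec_nth])
  then show ?thesis by (rule bounded_linear_compose[OF bounded_linear_Re])
qed

lemma linear_Q: "linear (\<lambda>A::complex^'m^'m. Re (cinner (A *v u) u))"
proof (rule linearI)
  fix A B :: "complex^'m^'m"
  show "Re (cinner ((A + B) *v u) u) = Re (cinner (A *v u) u) + Re (cinner (B *v u) u)"
    by (simp add: matrix_vector_mult_add_rdistrib cinner_add_left)
next
  fix c :: real and A :: "complex^'m^'m"
  have "(c *\<^sub>R A) *v u = c *\<^sub>R (A *v u)"
    unfolding matrix_vector_mult_def vec_eq_iff vector_scaleR_component
    by (simp add: scaleR_sum_right)
  then show "Re (cinner ((c *\<^sub>R A) *v u) u) = c *\<^sub>R Re (cinner (A *v u) u)"
    by (simp add: cinner_scaleR_left)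
qed

lemma bl_Q: "bounded_linear (\<lambda>A::complex^'m^'m. Re (cinner (A *v u) u))"
  using linear_Q linear_conv_bounded_linear by blast

lemma linear_adj: "linear (adj :: complex^'m^'m \<Rightarrow> complex^'m^'m)"
  by (rule linearI) (simp_all add: vec_eq_iff)

lemma bl_adj: "bounded_linear (adj :: complex^'m^'m \<Rightarrow> complex^'m^'m)"
  using linear_adj linear_conv_bounded_linear by blast

lemma joint_fc_spec:
  fixes x :: "'n::finite \<Rightarrow> complex^'m^'m" and f :: "real^'n \<Rightarrow> real"
  assumes "abelian_sa_tuple x"
  shows "\<exists>U D. unitary_mat U \<and> (\<forall>i. x i = U ** diag_mat (D i) ** adj U)
           \<and> joint_fc f x = U ** diag_mat (\<lambda>j. f (\<chi> i. D i j)) ** adj U"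
proof -
  have sa: "\<And>i. adj (x i) = x i" and comm: "\<And>i j. x i ** x j = x j ** x i"
    using assms unfolding abelian_sa_tuple_def self_adjoint_def by auto
  have "\<exists>U D. unitary_mat U \<and> (\<forall>i. x i = U ** diag_mat (D i) ** adj U)"
    by (rule spectral_joint) (rule sa, rule comm)
  then obtain U0 D0 where "unitary_mat U0" "\<forall>i. x i = U0 ** diag_mat (D0 i) ** adj U0" by blast
  then have ex: "\<exists>R U D. unitary_mat U \<and> (\<forall>i. x i = U ** diag_mat (D i) ** adj U)
      \<and> R = U ** diag_mat (\<lambda>j. f (\<chi> i. D i j)) ** adj U" by blast
  show ?thesis unfolding joint_fc_def by (rule someI_ex[OF ex])
qed

lemma eig_spec:
  fixes R :: "complex^'m^'m"
  assumes "adj R = R"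
  shows "\<exists>V d. unitary_mat V \<and> R = V ** diag_mat d ** adj V
     \<and> eigvals_desc R = rev (sorted_list_of_multiset (image_mset d (mset_set (UNIV :: 'm set))))"
proof -
  have "\<exists>U D. unitary_mat U \<and> (\<forall>i::unit. (\<lambda>_. R) i = U ** diag_mat (D i) ** adj U)"
    by (rule spectral_joint) (simp_all add: assms)
  then obtain U0 D0 where "unitary_mat U0" "R = U0 ** diag_mat (D0 ()) ** adj U0" by blast
  then have ex: "\<exists>M U d. unitary_mat U \<and> R = U ** diag_mat d ** adj U
                  \<and> M = image_mset d (mset_set (UNIV :: 'm set))" by blast
  obtain V d where "unitary_mat V" "R = V ** diag_mat d ** adj V"
     "(SOME M. \<exists>U d. unitary_mat U \<and> R = U ** diag_mat d ** adj U
                  \<and> M = image_mset d (mset_set (UNIV :: 'm set))) = image_mset d (mset_set (UNIV :: 'm set))"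
    using someI_ex[OF ex] by blast
  then show ?thesis unfolding eigvals_desc_def by metis
qed

lemma adj_diag[simp]: "adj (diag_mat d) = diag_mat d"
  by (simp add: vec_eq_iff diag_mat_def)

lemma sa_conj: "adj (V ** diag_mat d ** adj V) = V ** diag_mat d ** adj V"
  by (simp add: adj_mult matrix_mul_assoc)

lemma eig_col:
  assumes "unitary_mat W"
  shows "(W ** diag_mat d ** adj W) *v column l W = d l *\<^sub>R column l W"
proof -
  have "(W ** diag_mat d ** adj W) *v column l W = W *v (diag_mat d *v (adj W *v column l W))"
    by (simp add: matrix_vector_mul_assoc matrix_mul_assoc)
  also have "\<dots> = W *v (d l *\<^sub>R axis l 1)"
  proof -
    have "diag_mat d *v axis l 1 = d l *\<^sub>R axis l 1"
      unfolding diag_mult_vec vec_eq_iff axis_def vector_scaleR_component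
      by (simp add: scaleR_conv_of_real)
    then show ?thesis unfolding adj_U_col[OF assms] by simp
  qed
  also have "\<dots> = d l *\<^sub>R column l W"
  proof -
    have "W *v axis l 1 = column l W"
      by (simp add: matrix_vector_mult_def column_def axis_def
          vec_eq_iff if_distrib if_distribR cong: if_cong)
    then show ?thesis by (simp add: mvec_scaleR)
  qed
  finally show ?thesis .
qed

lemma cinner_adjW:
  assumes "unitary_mat W"
  shows "cinner (adj W *v w) (adj W *v w) = cinner w w"
proof -
  have "cinner (adj W *v w) (adj W *v w) = cinner w (W *v (adj W *v w))"
    by (simp add: cinner_adj2)
  also have "\<dots> = cinner w w" using assms
    by (simp add: matrix_vector_mul_assoc unitary_mat_def)
  finally show ?thesis .
qed

lemma cinner_self_sum: "Re (cinner z z) = (\<Sum>l\<in>UNIV. (cmod (z $ l))^2)"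
  by (simp add: cinner_def mult_cnj Re_sum)

lemma QA: "Re (cinner ((adj A ** X ** A) *v u) u) = Re (cinner (X *v (A *v u)) (A *v u))"
proof -
  have "(adj A ** X ** A) *v u = adj A *v (X *v (A *v u))"
    by (simp add: matrix_vector_mul_assoc matrix_mul_assoc)
  moreover have "cinner (adj A *v v) u = cinner v (A *v u)" for v
    using cinner_adj[of "adj A" v u] by simp
  ultimately show ?thesis by simp
qed

lemma QA1: "Re (cinner ((adj A ** A) *v u) u) = Re (cinner (A *v u) (A *v u))"
  using QA[of A "mat 1" u] by simp

lemma of_real_smult: "complex_of_real r *s (v::complex^'m) = r *\<^sub>R v"
  unfolding vec_eq_iff vector_scaleR_component unfolding scaleR_conv_of_real by simp

lemma integrable_conj_field:
  fixes a :: "'t::topological_space \<Rightarrow> complex^'m^'m" and X :: "'t \<Rightarrow> complex^'m^'m"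
  assumes sets: "sets M = sets borel" and ac: "continuous_on UNIV a"
    and ai: "integrable M (\<lambda>t. adj (a t) ** a t)"
    and Xc: "continuous_on UNIV X" and Xb: "bounded (range X)"
  shows "integrable M (\<lambda>t. adj (a t) ** X t ** a t)"
proof -
  obtain B where B: "\<And>t. norm (X t) \<le> B" using Xb unfolding bounded_iff by auto
  have B0: "0 \<le> B" using B[of undefined] norm_ge_zero order_trans by blast
  define m where "m = real (CARD('m))"
  have m0: "0 \<le> m" unfolding m_def by simp
  define C where "C = m^3 * m^3 * m^2 * B"
  have C0: "0 \<le> C" unfolding C_def using m0 B0 by simp
  have int_n: "integrable M (\<lambda>t. (norm (a t))^2)"
  proof -
    have h: "integrable M (\<lambda>t. Re ((adj (a t) ** a t) $ s $ s))" for s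
      using integrable_bounded_linear[OF bl_entry ai] .
    have "integrable M (\<lambda>t. \<Sum>s\<in>UNIV. Re ((adj (a t) ** a t) $ s $ s))"
      using h by simp
    then show ?thesis by (simp add: norm_sq_trace)
  qed
  have int_C: "integrable M (\<lambda>t. C * (norm (a t))^2)" using int_n by simp
  have meas: "(\<lambda>t. adj (a t) ** X t ** a t) \<in> borel_measurable M"
  proof -
    have "continuous_on UNIV (\<lambda>t. adj (a t) ** X t ** a t)"
      by (intro cont_mmult cont_adj ac Xc)
    then have "(\<lambda>t. adj (a t) ** X t ** a t) \<in> borel_measurable borel"
      by (rule borel_measurable_continuous_onI)
    then show ?thesis using measurable_cong_sets[OF sets refl[of "sets (borel :: (complex^'m^'m) measure)"]] by simp
  qed
  have bnd: "norm (adj (a t) ** X t ** a t) \<le> norm (C * (norm (a t))^2)" for t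
  proof -
    have "norm (adj (a t) ** X t ** a t) \<le> m^3 * (norm (adj (a t) ** X t) * norm (a t))"
      unfolding m_def by (rule norm_mmult_le)
    also have "\<dots> \<le> m^3 * ((m^3 * (norm (adj (a t)) * norm (X t))) * norm (a t))"
      using norm_mmult_le[of "adj (a t)" "X t"] m0 unfolding m_def
      by (intro mult_left_mono mult_right_mono) auto
    also have "\<dots> \<le> m^3 * ((m^3 * ((m^2 * norm (a t)) * B)) * norm (a t))"
      using norm_adj_le[of "a t"] B[of t] m0 B0 unfolding m_def
      by (intro mult_left_mono mult_right_mono mult_mono) auto
    also have "\<dots> = C * (norm (a t))^2" unfolding C_def by (simp add: power2_eq_square mult_ac)
    also have "\<dots> = norm (C * (norm (a t))^2)" using C0 by simp
    finally show ?thesis .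
  qed
  show ?thesis by (rule Bochner_Integration.integrable_bound[OF int_C meas]) (intro AE_I2 bnd)
qed

lemma per_j:
  fixes f :: "real^'n \<Rightarrow> real"
    and I :: "'n \<Rightarrow> real set"
    and \<nu> :: "'t measure"
    and a :: "'t \<Rightarrow> complex^'m^'m"
    and x :: "'n \<Rightarrow> 't \<Rightarrow> complex^'m^'m"
  assumes intervals: "\<And>i. is_interval (I i)"
    and f_cont: "continuous_on {z. \<forall>i. z $ i \<in> I i} f"
    and f_convex: "convex_on {z. \<forall>i. z $ i \<in> I i} f"
    and ai: "integrable \<nu> (\<lambda>t. adj (a t) ** a t)"
    and a1: "integral\<^sup>L \<nu> (\<lambda>t. adj (a t) ** a t) = mat 1"
    and ix: "\<And>i. integrable \<nu> (\<lambda>t. adj (a t) ** x i t ** a t)"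
    and x_abelian: "\<And>t. abelian_sa_tuple (\<lambda>i. x i t)"
    and x_spec: "\<And>i t. spec (x i t) \<subseteq> complex_of_real ` I i"
    and rhs_integrable: "integrable \<nu> (\<lambda>t. adj (a t) ** joint_fc f (\<lambda>i. x i t) ** a t)"
    and U: "unitary_mat U"
    and yU: "\<And>i. integral\<^sup>L \<nu> (\<lambda>t. adj (a t) ** x i t ** a t) = U ** diag_mat (D i) ** adj U"
  shows "f (\<chi> i. D i j) \<le> Re (cinner (integral\<^sup>L \<nu> (\<lambda>t. adj (a t) ** joint_fc f (\<lambda>i. x i t) ** a t) *v column j U) (column j U))"
proof -
  define u where "u = column j U"
  define Q where "Q = (\<lambda>A::complex^'m^'m. Re (cinner (A *v u) u))"
  have blQ: "bounded_linear Q" unfolding Q_def by (rule bl_Q)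
  define c where "c = (\<lambda>t. Q (adj (a t) ** a t))"
  define phi where "phi = (\<lambda>i t. Q (adj (a t) ** x i t ** a t))"
  define psi where "psi = (\<lambda>t. Q (adj (a t) ** joint_fc f (\<lambda>i. x i t) ** a t))"
  define lam :: "real^'n" where "lam = (\<chi> i. D i j)"
  have ic: "integrable \<nu> c" unfolding c_def by (rule integrable_bounded_linear[OF blQ ai])
  have iphi: "integrable \<nu> (phi i)" for i unfolding phi_def by (rule integrable_bounded_linear[OF blQ ix])
  have ipsi: "integrable \<nu> psi" unfolding psi_def by (rule integrable_bounded_linear[OF blQ rhs_integrable])
  have c1: "integral\<^sup>L \<nu> c = 1"
  proof -
    have "integral\<^sup>L \<nu> c = Q (mat 1)" unfolding c_def integral_bounded_linear[OF blQ ai] a1 ..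
    also have "\<dots> = 1" unfolding Q_def u_def using unitary_cols[OF U, of j j] by simp
    finally show ?thesis .
  qed
  have philam: "integral\<^sup>L \<nu> (phi i) = lam $ i" for i
  proof -
    have "integral\<^sup>L \<nu> (phi i) = Q (U ** diag_mat (D i) ** adj U)"
      unfolding phi_def integral_bounded_linear[OF blQ ix] yU ..
    also have "\<dots> = D i j" unfolding Q_def u_def qf_col[OF U] by simp
    finally show ?thesis by (simp add: lam_def)
  qed
  have pw: "\<exists>p (mu :: 'm \<Rightarrow> real^'n). (\<forall>l. 0 \<le> p l \<and> mu l \<in> {z. \<forall>i. z $ i \<in> I i}) \<and> c t = (\<Sum>l\<in>UNIV. p l)
                \<and> (\<forall>i. phi i t = (\<Sum>l\<in>UNIV. p l * mu l $ i)) \<and> psi t = (\<Sum>l\<in>UNIV. p l * f (mu l))" for t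
  proof -
    obtain W \<mu> where W: "unitary_mat W" and xW: "\<forall>i. x i t = W ** diag_mat (\<mu> i) ** adj W"
      and fW: "joint_fc f (\<lambda>i. x i t) = W ** diag_mat (\<lambda>l. f (\<chi> i. \<mu> i l)) ** adj W"
      using joint_fc_spec[OF x_abelian[of t], of f] by blast
    define w where "w = a t *v u"
    define z where "z = adj W *v w"
    define p where "p = (\<lambda>l. (cmod (z $ l))^2)"
    define mu :: "'m \<Rightarrow> real^'n" where "mu = (\<lambda>l. \<chi> i. \<mu> i l)"
    have "c t = Re (cinner w w)" unfolding c_def Q_def w_def by (rule QA1)
    also have "\<dots> = Re (cinner z z)" unfolding z_def cinner_adjW[OF W] ..
    also have "\<dots> = (\<Sum>l\<in>UNIV. p l)" unfolding p_def by (rule cinner_self_sum)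
    finally have cp: "c t = (\<Sum>l\<in>UNIV. p l)" .
    have php: "phi i t = (\<Sum>l\<in>UNIV. p l * mu l $ i)" for i
    proof -
      have "phi i t = Re (cinner (x i t *v w) w)" unfolding phi_def Q_def w_def by (rule QA)
      also have "\<dots> = Re (cinner ((W ** diag_mat (\<mu> i) ** adj W) *v w) w)" using xW by simp
      also have "\<dots> = (\<Sum>l\<in>UNIV. \<mu> i l * p l)" unfolding qf_diag p_def z_def by simp
      finally show ?thesis by (simp add: mu_def mult.commute)
    qed
    have psp: "psi t = (\<Sum>l\<in>UNIV. p l * f (mu l))"
    proof -
      have "psi t = Re (cinner (joint_fc f (\<lambda>i. x i t) *v w) w)" unfolding psi_def Q_def w_def by (rule QA)
      also have "\<dots> = Re (cinner ((W ** diag_mat (\<lambda>l. f (\<chi> i. \<mu> i l)) ** adj W) *v w) w)" using fW by simp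
      also have "\<dots> = (\<Sum>l\<in>UNIV. f (\<chi> i. \<mu> i l) * p l)" unfolding qf_diag p_def z_def by simp
      finally show ?thesis by (simp add: mu_def mult.commute)
    qed
    have muK: "mu l \<in> {z. \<forall>i. z $ i \<in> I i}" for l
    proof -
      { fix i
        have ev: "x i t *v column l W = \<mu> i l *\<^sub>R column l W"
          using xW eig_col[OF W, of "\<mu> i" l] by simp
        have nz: "column l W \<noteq> 0" using unitary_cols[OF W, of l l] by auto
        have "complex_of_real (\<mu> i l) \<in> spec (x i t)" unfolding spec_def
          using ev nz by (auto simp: of_real_smult)
        then have "complex_of_real (\<mu> i l) \<in> complex_of_real ` I i" using x_spec by blast
        then have "\<mu> i l \<in> I i" by (auto simp: of_real_eq_iff)
      }
      then show ?thesis by (simp add: mu_def)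
    qed
    show ?thesis using cp php psp muK by (intro exI[of _ p] exI[of _ mu]) (auto simp: p_def)
  qed
  have "lam \<in> {z. \<forall>i. z $ i \<in> I i} \<and> f lam \<le> integral\<^sup>L \<nu> psi"
    by (rule jensen_abstract[where M=\<nu> and c=c and phi=phi and psi=psi, OF intervals f_cont f_convex
          ic iphi ipsi c1 philam pw])
  moreover have "integral\<^sup>L \<nu> psi = Re (cinner (integral\<^sup>L \<nu> (\<lambda>t. adj (a t) ** joint_fc f (\<lambda>i. x i t) ** a t) *v column j U) (column j U))"
  proof -
    have "integral\<^sup>L \<nu> psi = Q (integral\<^sup>L \<nu> (\<lambda>t. adj (a t) ** joint_fc f (\<lambda>i. x i t) ** a t))"
      unfolding psi_def by (rule integral_bounded_linear[OF blQ rhs_integrable])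
    then show ?thesis unfolding Q_def u_def .
  qed
  ultimately show ?thesis by (simp add: lam_def)
qed

theorem mainTheorem6:
  fixes f :: "real^'n \<Rightarrow> real"
    and I :: "'n \<Rightarrow> real set"
    and \<nu> :: "'t::t2_space measure"
    and a :: "'t \<Rightarrow> complex^'m^'m"
    and x :: "'n \<Rightarrow> 't \<Rightarrow> complex^'m^'m"
  assumes intervals: "\<And>i. is_interval (I i)"
    and f_cont: "continuous_on {z. \<forall>i. z $ i \<in> I i} f"
    and f_convex: "convex_on {z. \<forall>i. z $ i \<in> I i} f"
    and T_lc: "locally_compact_space (euclidean :: 't topology)"
    and radon: "radon_measure \<nu>"
    and a_field: "unital_column_field \<nu> a"
    and x_cont: "\<And>i. continuous_on UNIV (x i)"
    and x_bdd: "\<And>i. bounded (range (x i))"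
    and x_abelian: "\<And>t. abelian_sa_tuple (\<lambda>i. x i t)"
    and x_spec: "\<And>i t. spec (x i t) \<subseteq> complex_of_real ` I i"
    and y_abelian: "abelian_sa_tuple (\<lambda>i. integral\<^sup>L \<nu> (\<lambda>t. adj (a t) ** x i t ** a t))"
    and rhs_integrable: "integrable \<nu> (\<lambda>t. adj (a t) ** joint_fc f (\<lambda>i. x i t) ** a t)"
  shows "weak_major
           (joint_fc f (\<lambda>i. integral\<^sup>L \<nu> (\<lambda>t. adj (a t) ** x i t ** a t)))
           (integral\<^sup>L \<nu> (\<lambda>t. adj (a t) ** joint_fc f (\<lambda>i. x i t) ** a t))"
proof -
  have ac: "continuous_on UNIV a" and ai: "integrable \<nu> (\<lambda>t. adj (a t) ** a t)"
    and a1: "integral\<^sup>L \<nu> (\<lambda>t. adj (a t) ** a t) = mat 1"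
    using a_field unfolding unital_column_field_def by auto
  have sets: "sets \<nu> = sets borel" using radon unfolding radon_measure_def by auto
  have ix: "integrable \<nu> (\<lambda>t. adj (a t) ** x i t ** a t)" for i
    by (rule integrable_conj_field[OF sets ac ai x_cont x_bdd])
  define y where "y = (\<lambda>i. integral\<^sup>L \<nu> (\<lambda>t. adj (a t) ** x i t ** a t))"
  define Rm where "Rm = integral\<^sup>L \<nu> (\<lambda>t. adj (a t) ** joint_fc f (\<lambda>i. x i t) ** a t)"
  obtain U D where U: "unitary_mat U" and yU: "\<forall>i. y i = U ** diag_mat (D i) ** adj U"
    and fy: "joint_fc f y = U ** diag_mat (\<lambda>j. f (\<chi> i. D i j)) ** adj U"
    using joint_fc_spec[OF y_abelian, of f] unfolding y_def by blast
  define g where "g = (\<lambda>j. f (\<chi> i. D i j))"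
  have J: "g j \<le> Re (cinner (Rm *v column j U) (column j U))" for j
    unfolding g_def Rm_def
    by (rule per_j[OF intervals f_cont f_convex ai a1 ix x_abelian x_spec rhs_integrable U])
       (use yU y_def in auto)
  have Gsa: "adj (joint_fc f (\<lambda>i. x i t)) = joint_fc f (\<lambda>i. x i t)" for t
  proof -
    obtain W \<mu> where "joint_fc f (\<lambda>i. x i t) = W ** diag_mat (\<lambda>l. f (\<chi> i. \<mu> i l)) ** adj W"
      using joint_fc_spec[OF x_abelian[of t], of f] by blast
    then show ?thesis by (simp add: sa_conj)
  qed
  have Rsa: "adj Rm = Rm"
  proof -
    have "adj Rm = integral\<^sup>L \<nu> (\<lambda>t. adj (adj (a t) ** joint_fc f (\<lambda>i. x i t) ** a t))"
      unfolding Rm_def by (rule integral_bounded_linear[OF bl_adj rhs_integrable, symmetric])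
    also have "\<dots> = Rm" unfolding Rm_def
      by (simp add: adj_mult matrix_mul_assoc Gsa)
    finally show ?thesis .
  qed
  obtain VR dR where VR: "unitary_mat VR" and RV: "Rm = VR ** diag_mat dR ** adj VR"
    and eR: "eigvals_desc Rm = rev (sorted_list_of_multiset (image_mset dR (mset_set (UNIV :: 'm set))))"
    using eig_spec[OF Rsa] by blast
  have fysa: "adj (joint_fc f y) = joint_fc f y" unfolding fy by (rule sa_conj)
  obtain VL dL where VL: "unitary_mat VL" and LV: "joint_fc f y = VL ** diag_mat dL ** adj VL"
    and eL: "eigvals_desc (joint_fc f y) = rev (sorted_list_of_multiset (image_mset dL (mset_set (UNIV :: 'm set))))"
    using eig_spec[OF fysa] by blast
  have main: "sum_list (take k (eigvals_desc (joint_fc f y))) \<le> sum_list (take k (eigvals_desc Rm))"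
    if k: "k \<le> CARD('m)" for k
  proof -
    obtain L1 where L1: "card L1 = k" "topk k dL = sum dL L1"
      using topk_set[OF k, of dL] by blast
    obtain L2 where L2: "card L2 = k" "topk k g = sum g L2"
      using topk_set[OF k, of g] by blast
    have "sum_list (take k (eigvals_desc (joint_fc f y))) = sum dL L1"
      using L1(2) unfolding eL topk_def by simp
    also have "\<dots> = (\<Sum>j\<in>L1. Re (cinner (joint_fc f y *v column j VL) (column j VL)))"
      unfolding LV qf_col[OF VL] by simp
    also have "\<dots> \<le> topk k g"
      unfolding fy g_def[symmetric] by (rule kyfan[OF VL U L1(1) k])
    also have "\<dots> \<le> (\<Sum>j\<in>L2. Re (cinner (Rm *v column j U) (column j U)))"
      unfolding L2(2) by (rule sum_mono) (rule J)
    also have "\<dots> \<le> topk k dR"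
      unfolding RV by (rule kyfan[OF U VR L2(1) k])
    also have "\<dots> = sum_list (take k (eigvals_desc Rm))"
      unfolding eR topk_def ..
    finally show ?thesis .
  qed
  show ?thesis
    unfolding y_def[symmetric] Rm_def[symmetric] weak_major_def
    using main by auto
qed

end
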